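(* Let $(G,S,T,k,\ell)$ be an instance of \textsc{Token Sliding Optimization} and let $V(G)=H\cup M$ be a partition such that $G[H]$ has maximum degree at most $\Delta$. Let $\sigma$ be a reconfiguration sequence from $S$ to $T$ of length at most $\ell$, let $V(\sigma)$ be the set of vertices touched by $\sigma$, and let $\chi:H\to\{\mathcal{R},\mathcal{B}\}$ be a coloring that is successful for $\sigma$. Let $H_{\mathcal{R}}=\chi^{-1}(\mathcal{R})$. Then $V(\sigma)$ has non-empty intersection with at most $2\ell$ connected components of $G[H_{\mathcal{R}}]$, and each connected component of $G[H_{\mathcal{R}}]$ that intersects $V(\sigma)$ has at most $2\ell$ vertices.
   Context: An instance $(G,S,T,k,\ell)$ of \textsc{Token Sliding Optimization}: $G$ a simple graph, $S,T$ independent sets of size $k$, $\ell\ge1$. A reconfiguration sequence of length $m$ from $S$ to $T$ is a sequence $S=I_0,\dots,I_m=T$ of independent sets of size $k$ with each $I_{j+1}=(I_j\setminus\{u\})\cup\{v\}$ for some $u\in I_j$, $v\notin I_j$, $\{u,v\}\in E(G)$ (a token slides from $u$ to $v$). A vertex is touched by $\sigma$ if at some step a token slides from it to a neighbor or from a neighbor to it. For $Y\subseteq H$, $N_H(Y)=\{v\in H\setminus Y: v\text{ adjacent to some vertex of }Y\}$. The coloring $\chi$ is successful if every vertex of $V(\sigma)\cap H$ is colored $\mathcal{R}$ and every vertex of $N_H(V(\sigma)\cap H)$ is colored $\mathcal{B}$. *)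

theory Defs
  imports Main
begin

definition simple_graph :: "'a set \<Rightarrow> ('a \<Rightarrow> 'a \<Rightarrow> bool) \<Rightarrow> bool" where
  "simple_graph V E \<longleftrightarrow> finite V \<and> (\<forall>u v. E u v \<longrightarrow> u \<in> V \<and> v \<in> V)
     \<and> (\<forall>u v. E u v \<longrightarrow> E v u) \<and> (\<forall>v. \<not> E v v)"

definition indep_set :: "'a set \<Rightarrow> ('a \<Rightarrow> 'a \<Rightarrow> bool) \<Rightarrow> 'a set \<Rightarrow> bool" where
  "indep_set V E I \<longleftrightarrow> I \<subseteq> V \<and> (\<forall>u\<in>I. \<forall>v\<in>I. \<not> E u v)"

definition slide :: "('a \<Rightarrow> 'a \<Rightarrow> bool) \<Rightarrow> 'a \<Rightarrow> 'a \<Rightarrow> 'a set \<Rightarrow> 'a set \<Rightarrow> bool" where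
  "slide E u v I J \<longleftrightarrow> u \<in> I \<and> v \<notin> I \<and> E u v \<and> J = (I - {u}) \<union> {v}"

definition reconf_seq :: "'a set \<Rightarrow> ('a \<Rightarrow> 'a \<Rightarrow> bool) \<Rightarrow> nat \<Rightarrow> 'a set \<Rightarrow> 'a set \<Rightarrow> 'a set list \<Rightarrow> bool" where
  "reconf_seq V E k S T Is \<longleftrightarrow> Is \<noteq> [] \<and> hd Is = S \<and> last Is = T
     \<and> (\<forall>I\<in>set Is. indep_set V E I \<and> card I = k)
     \<and> (\<forall>j. Suc j < length Is \<longrightarrow> (\<exists>u v. slide E u v (Is ! j) (Is ! Suc j)))"

definition seq_length :: "'a set list \<Rightarrow> nat" where
  "seq_length Is = length Is - 1"

definition touched :: "('a \<Rightarrow> 'a \<Rightarrow> bool) \<Rightarrow> 'a set list \<Rightarrow> 'a set" where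
  "touched E Is = {x. \<exists>j u v. Suc j < length Is \<and> slide E u v (Is ! j) (Is ! Suc j) \<and> (x = u \<or> x = v)}"

definition nbhd_in :: "('a \<Rightarrow> 'a \<Rightarrow> bool) \<Rightarrow> 'a set \<Rightarrow> 'a set \<Rightarrow> 'a set" where
  "nbhd_in E H Y = {v \<in> H - Y. \<exists>y\<in>Y. E v y}"

datatype colour = Red | Blue

definition successful :: "('a \<Rightarrow> 'a \<Rightarrow> bool) \<Rightarrow> 'a set \<Rightarrow> ('a \<Rightarrow> colour) \<Rightarrow> 'a set list \<Rightarrow> bool" where
  "successful E H \<chi> Is \<longleftrightarrow> (\<forall>v \<in> touched E Is \<inter> H. \<chi> v = Red)
     \<and> (\<forall>v \<in> nbhd_in E H (touched E Is \<inter> H). \<chi> v = Blue)"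

definition max_deg_le :: "('a \<Rightarrow> 'a \<Rightarrow> bool) \<Rightarrow> 'a set \<Rightarrow> nat \<Rightarrow> bool" where
  "max_deg_le E H d \<longleftrightarrow> (\<forall>v\<in>H. card {u \<in> H. E v u} \<le> d)"

definition comp_of :: "('a \<Rightarrow> 'a \<Rightarrow> bool) \<Rightarrow> 'a set \<Rightarrow> 'a \<Rightarrow> 'a set" where
  "comp_of E X v = {w. (\<lambda>x y. x \<in> X \<and> y \<in> X \<and> E x y)\<^sup>*\<^sup>* v w}"

definition components :: "('a \<Rightarrow> 'a \<Rightarrow> bool) \<Rightarrow> 'a set \<Rightarrow> 'a set set" where
  "components E X = comp_of E X ` X"

end

theory Submission
  imports Defs
begin

lemma slide_unique:
  assumes "slide E u v I J" "slide E u' v' I J" shows "u = u' \<and> v = v'"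
  using assms unfolding slide_def by blast

lemma touched_card:
  assumes "finite (touched E Is) \<or> True"
  shows "finite (touched E Is) \<and> card (touched E Is) \<le> 2 * (length Is - 1)"
proof -
  define f where "f j = {x. \<exists>u v. slide E u v (Is ! j) (Is ! Suc j) \<and> (x = u \<or> x = v)}" for j
  have fj: "finite (f j) \<and> card (f j) \<le> 2" for j
  proof (cases "\<exists>u v. slide E u v (Is ! j) (Is ! Suc j)")
    case True
    then obtain u0 v0 where s: "slide E u0 v0 (Is ! j) (Is ! Suc j)" by blast
    have "f j \<subseteq> {u0, v0}" unfolding f_def using slide_unique[OF s] by blast
    moreover have "card {u0, v0} \<le> 2" by (simp add: card_insert_if)
    ultimately show ?thesis by (meson card_mono finite.emptyI finite.insertI finite_subset order_trans)
  next
    case False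
    then have "f j = {}" unfolding f_def by blast
    then show ?thesis by simp
  qed
  have eq: "touched E Is = (\<Union>j\<in>{..<length Is - 1}. f j)"
  proof -
    have le: "\<And>j. (Suc j < length Is) = (j < length Is - 1)" by arith
    show ?thesis unfolding touched_def f_def lessThan_iff le by blast
  qed
  have "card (\<Union>j\<in>{..<length Is - 1}. f j) \<le> (\<Sum>j\<in>{..<length Is - 1}. card (f j))"
    by (rule card_UN_le) simp
  also have "\<dots> \<le> (\<Sum>j\<in>{..<length Is - 1}. 2)" by (rule sum_mono) (use fj in auto)
  finally show ?thesis using eq fj by simp
qed

theorem lemma4p1:
  fixes V H M :: "'a set" and E :: "'a \<Rightarrow> 'a \<Rightarrow> bool"
    and S T :: "'a set" and k l \<Delta> :: nat
    and Is :: "'a set list" and \<chi> :: "'a \<Rightarrow> colour"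
  assumes "simple_graph V E"
    and "indep_set V E S" "card S = k" "indep_set V E T" "card T = k"
    and "l \<ge> 1"
    and "V = H \<union> M" "H \<inter> M = {}"
    and "max_deg_le E H \<Delta>"
    and "reconf_seq V E k S T Is" "seq_length Is \<le> l"
    and "successful E H \<chi> Is"
  shows "card {C \<in> components E {v \<in> H. \<chi> v = Red}. C \<inter> touched E Is \<noteq> {}} \<le> 2 * l
    \<and> (\<forall>C \<in> components E {v \<in> H. \<chi> v = Red}. C \<inter> touched E Is \<noteq> {} \<longrightarrow> card C \<le> 2 * l)"
proof -
  define R where "R = {v \<in> H. \<chi> v = Red}"
  define P where "P = (\<lambda>x y. x \<in> R \<and> y \<in> R \<and> E x y)"
  have sym: "\<And>u v. E u v \<Longrightarrow> E v u" using assms(1) unfolding simple_graph_def by blast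
  have red: "\<And>v. v \<in> touched E Is \<inter> H \<Longrightarrow> \<chi> v = Red"
    and blue: "\<And>v. v \<in> nbhd_in E H (touched E Is \<inter> H) \<Longrightarrow> \<chi> v = Blue"
    using assms(12) unfolding successful_def by auto
  have fin: "finite (touched E Is)" and ct: "card (touched E Is) \<le> 2 * l"
    using touched_card[of E Is] assms(11) unfolding seq_length_def by auto
  have propag: "P\<^sup>*\<^sup>* x w \<Longrightarrow> x \<in> touched E Is \<inter> R \<Longrightarrow> w \<in> touched E Is \<inter> R" for x w
  proof (induction rule: rtranclp_induct)
    case base then show ?case by simp
  next
    case (step y z)
    then have y: "y \<in> touched E Is \<inter> R" and z: "z \<in> R" "E y z" unfolding P_def by auto
    show ?case
    proof (rule ccontr)
      assume "z \<notin> touched E Is \<inter> R"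
      then have "z \<in> nbhd_in E H (touched E Is \<inter> H)"
        using y z sym unfolding nbhd_in_def R_def by blast
      then have "\<chi> z = Blue" by (rule blue)
      then show False using z unfolding R_def by simp
    qed
  qed
  have compeq: "comp_of E R v = {w. P\<^sup>*\<^sup>* v w}" for v unfolding comp_of_def P_def by simp
  have Psym: "P\<^sup>*\<^sup>* a b \<Longrightarrow> P\<^sup>*\<^sup>* b a" for a b
  proof -
    have "symp P" unfolding symp_def P_def using sym by blast
    moreover assume "P\<^sup>*\<^sup>* a b"
    ultimately show ?thesis by (metis symp_rtranclp symp_def)
  qed
  have key: "C \<in> components E R \<Longrightarrow> x \<in> C \<inter> touched E Is \<Longrightarrow> C = comp_of E R x \<and> C \<subseteq> touched E Is \<and> x \<in> R" for C x
  proof -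
    assume C: "C \<in> components E R" and x: "x \<in> C \<inter> touched E Is"
    then obtain v where v: "v \<in> R" "C = comp_of E R v" unfolding components_def by blast
    have vx: "P\<^sup>*\<^sup>* v x" using x v compeq by auto
    have xR: "x \<in> R"
      using vx v(1) by (induction rule: rtranclp_induct) (auto simp: P_def)
    have xv: "P\<^sup>*\<^sup>* x v" using Psym[OF vx] .
    have "C = comp_of E R x" unfolding v compeq
      using vx xv by (auto intro: rtranclp_trans)
    moreover have "C \<subseteq> touched E Is" using propag x xR \<open>C = comp_of E R x\<close> compeq by auto
    ultimately show ?thesis using xR by simp
  qed
  have A: "{C \<in> components E R. C \<inter> touched E Is \<noteq> {}} \<subseteq> comp_of E R ` touched E Is"
    using key by blast
  have "card {C \<in> components E R. C \<inter> touched E Is \<noteq> {}} \<le> card (comp_of E R ` touched E Is)"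
    by (rule card_mono[OF _ A]) (use fin in simp)
  also have "\<dots> \<le> card (touched E Is)" by (rule card_image_le[OF fin])
  finally have 1: "card {C \<in> components E R. C \<inter> touched E Is \<noteq> {}} \<le> 2 * l" using ct by simp
  have 2: "\<forall>C \<in> components E R. C \<inter> touched E Is \<noteq> {} \<longrightarrow> card C \<le> 2 * l"
  proof (intro ballI impI)
    fix C assume "C \<in> components E R" "C \<inter> touched E Is \<noteq> {}"
    then have "C \<subseteq> touched E Is" using key by blast
    then have "card C \<le> card (touched E Is)" using fin by (rule card_mono[rotated])
    then show "card C \<le> 2 * l" using ct by simp
  qed
  show ?thesis using 1 2 unfolding R_def by simp
qed

end
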